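(* Let $G$ be an abelian group, $t$ a positive integer, and $U,V\subset G$ finite sets with $t\leq |V|\leq |U|$. Then \[\sum _{x\in G} \min(1_U*1_V(x), t)\ge t\big(|U|+|V|-t-\alpha(U,V)\big).\]
   Context: For $x\in G$, $1_U*1_V(x)$ is the number of pairs $(u,v)\in U\times V$ with $u+v=x$. For finite $U,V\subset G$, $\alpha(U,V)=\max\{|V'|: V'\subset G,\ |V'|\leq |V|,\ |\langle V'\rangle|\leq |U|+|V|-|V'|\}$, where $\langle V'\rangle$ is the subgroup generated by $V'$. *)

theory Defs
  imports Main
begin

definition gen_subgroup :: "'a::ab_group_add set \<Rightarrow> 'a set" where
  "gen_subgroup S = \<Inter>{H. S \<subseteq> H \<and> 0 \<in> H \<and> (\<forall>x\<in>H. \<forall>y\<in>H. x + y \<in> H) \<and> (\<forall>x\<in>H. - x \<in> H)}"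

definition conv_count :: "'a::ab_group_add set \<Rightarrow> 'a set \<Rightarrow> 'a \<Rightarrow> nat" where
  "conv_count U V x = card {(u, v). u \<in> U \<and> v \<in> V \<and> u + v = x}"

(* alpha(U,V); the subgroup size condition is read with the subgroup finite *)
definition alpha :: "'a::ab_group_add set \<Rightarrow> 'a set \<Rightarrow> nat" where
  "alpha U V = Max {card V' | V' :: 'a set. finite V' \<and> card V' \<le> card V \<and>
      finite (gen_subgroup V') \<and> card (gen_subgroup V') + card V' \<le> card U + card V}"

end

theory Submission
  imports Defs
begin

lemma sumset_eq: "{u + v | u v. u \<in> U \<and> v \<in> V} = (\<lambda>(u,v). u + v) ` (U \<times> V)"
  by auto

lemma conv_le:
  assumes "finite V"
  shows "conv_count U V x \<le> card V"
  unfolding conv_count_def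
proof (rule card_inj_on_le[where f=snd])
  show "inj_on snd {(u, v). u \<in> U \<and> v \<in> V \<and> u + v = x}"
    by (auto simp: inj_on_def)
qed (use assms in auto)

lemma sum_conv:
  fixes U V :: "'a::ab_group_add set"
  assumes "finite U" "finite V"
  shows "(\<Sum>x\<in>{u + v | u v. u \<in> U \<and> v \<in> V}. conv_count U V x) = card U * card V"
proof -
  let ?S = "{u + v | u v. u \<in> U \<and> v \<in> V}"
  have fS: "finite ?S" unfolding sumset_eq using assms by auto
  have eq: "U \<times> V = (\<Union>x\<in>?S. {p\<in>U\<times>V. fst p + snd p = x})"
  proof
    show "U \<times> V \<subseteq> (\<Union>x\<in>?S. {p\<in>U\<times>V. fst p + snd p = x})"
    proof (rule subsetI)
      fix p assume p: "p \<in> U \<times> V"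
      have "fst p + snd p \<in> ?S" using p by (cases p) auto
      thus "p \<in> (\<Union>x\<in>?S. {p\<in>U\<times>V. fst p + snd p = x})"
        by (rule UN_I) (use p in simp)
    qed
  qed auto
  have c0: "card (\<Union>x\<in>?S. {p\<in>U\<times>V. fst p + snd p = x}) = (\<Sum>x\<in>?S. card {p\<in>U\<times>V. fst p + snd p = x})"
    by (rule card_UN_disjoint) (use fS assms in auto)
  have c1: "card (U \<times> V) = (\<Sum>x\<in>?S. card {p\<in>U\<times>V. fst p + snd p = x})"
    by (rule trans[OF arg_cong[where f=card, OF eq] c0])
  have c2: "conv_count U V x = card {p\<in>U\<times>V. fst p + snd p = x}" for x
    unfolding conv_count_def by (rule arg_cong[where f=card]) auto
  have "(\<Sum>x\<in>?S. conv_count U V x) = (\<Sum>x\<in>?S. card {p\<in>U\<times>V. fst p + snd p = x})"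
    by (rule sum.cong[OF refl]) (rule c2)
  also have "\<dots> = card (U \<times> V)" by (rule c1[symmetric])
  also have "\<dots> = card U * card V" by (rule card_cartesian_product)
  finally show ?thesis .
qed

lemma conv_zero:
  assumes "x \<notin> {u + v | u v. u \<in> U \<and> v \<in> V}"
  shows "conv_count U V x = 0"
proof -
  have "{(u, v). u \<in> U \<and> v \<in> V \<and> u + v = x} = {}" using assms by auto
  thus ?thesis unfolding conv_count_def by (metis card.empty)
qed

lemma conv_split:
  fixes U V :: "'a::ab_group_add set"
  assumes "finite U" "finite V"
  shows "conv_count (U \<union> (\<lambda>v. v + e) ` V) (V \<inter> {v. v + e \<in> U}) x
       + conv_count (U - (\<lambda>v. v + e) ` (V \<inter> {v. v + e \<in> U})) (V - (V \<inter> {v. v + e \<in> U})) x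
       \<le> conv_count U V x"
proof -
  let ?V' = "V \<inter> {v. v + e \<in> U}"
  let ?P1 = "{(u, v). u \<in> U \<union> (\<lambda>v. v + e) ` V \<and> v \<in> ?V' \<and> u + v = x}"
  let ?P2 = "{(u, v). u \<in> U - (\<lambda>v. v + e) ` ?V' \<and> v \<in> V - ?V' \<and> u + v = x}"
  let ?P = "{(u, v). u \<in> U \<and> v \<in> V \<and> u + v = x}"
  let ?f = "\<lambda>(u,v). if u \<in> U then (u,v) else (v + e, u - e)"
  have inj: "inj_on ?f ?P1"
    by (auto simp: inj_on_def split: if_splits)
  have sub1: "?f ` ?P1 \<subseteq> ?P"
  proof
    fix p assume "p \<in> ?f ` ?P1"
    then obtain u v where uv: "(u,v) \<in> ?P1" "p = ?f (u,v)" by blast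
    show "p \<in> ?P"
    proof (cases "u \<in> U")
      case True thus ?thesis using uv by auto
    next
      case False
      then obtain w where "w \<in> V" "u = w + e" using uv by auto
      thus ?thesis using uv False by (auto simp: algebra_simps)
    qed
  qed
  have sub2: "?P2 \<subseteq> ?P" by auto
  have disj: "?f ` ?P1 \<inter> ?P2 = {}"
  proof (rule equals0I)
    fix p assume pI: "p \<in> ?f ` ?P1 \<inter> ?P2"
    hence p1: "p \<in> ?f ` ?P1" and p2: "p \<in> ?P2" by (rule IntD1, rule IntD2)
    from p1 obtain q where q: "q \<in> ?P1" "p = ?f q" by (rule imageE)
    obtain u v where quv: "q = (u, v)" by (cases q)
    have uv: "(u, v) \<in> ?P1" "?f (u, v) = p" "p \<in> ?P2" using q quv p2 by simp_all
    have vV': "v \<in> ?V'" using uv(1) by simp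
    show False
    proof (cases "u \<in> U")
      case True
      hence "p = (u, v)" using uv(2) by simp
      hence "v \<in> V - ?V'" using uv(3) by simp
      thus False using vV' by simp
    next
      case False
      hence "p = (v + e, u - e)" using uv(2) by simp
      hence "v + e \<notin> (\<lambda>v. v + e) ` ?V'" using uv(3) by simp
      moreover have "v + e \<in> (\<lambda>v. v + e) ` ?V'" using vV' by (rule imageI)
      ultimately show False by contradiction
    qed
  qed
  have fP: "finite ?P" by (rule finite_subset[of _ "U \<times> V"]) (use assms in auto)
  have "card ?P1 + card ?P2 = card (?f ` ?P1) + card ?P2" using card_image[OF inj] by simp
  also have "\<dots> = card (?f ` ?P1 \<union> ?P2)"
    by (rule card_Un_disjoint[OF finite_subset[OF sub1 fP] finite_subset[OF sub2 fP] disj, symmetric])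
  also have "\<dots> \<le> card ?P" by (rule card_mono[OF fP]) (rule Un_least[OF sub1 sub2])
  finally show ?thesis unfolding conv_count_def .
qed

lemma conv_transform:
  fixes U V :: "'a::ab_group_add set"
  assumes "finite U" "finite V"
  shows "conv_count (U \<union> (\<lambda>v. v + e) ` V) (V \<inter> {v. v + e \<in> U}) x \<le> conv_count U V x"
  using conv_split[OF assms, of e x] by linarith

lemma main:
  fixes U V :: "'a::ab_group_add set"
  assumes "finite V" "finite U" "card V \<le> card U" "t \<le> card V"
    "\<And>W::'a set. finite W \<Longrightarrow> card W \<le> card V \<Longrightarrow> finite (gen_subgroup W) \<Longrightarrow>
        card (gen_subgroup W) + card W \<le> card U + card V \<Longrightarrow> card W \<le> a"
  shows "(\<Sum>x\<in>{u + v | u v. u \<in> U \<and> v \<in> V}. int (min (conv_count U V x) t))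
           \<ge> int t * (int (card U) + int (card V) - int t - int a)"
  using assms
proof (induction "card V" arbitrary: U V t rule: less_induct)
  case less
  let ?S = "{u + v | u v. u \<in> U \<and> v \<in> V}"
  have fS: "finite ?S" unfolding sumset_eq using less.prems by auto
  have tV: "t \<le> card V" using less.prems by simp
    show ?case
    proof (cases "\<exists>u\<in>U. \<exists>v\<in>V. \<not> (\<lambda>w. w + (u - v)) ` V \<subseteq> U")
      case True
      then obtain u1 v1 where u1: "u1 \<in> U" and v1: "v1 \<in> V"
        and ns: "\<not> (\<lambda>w. w + (u1 - v1)) ` V \<subseteq> U" by blast
      define e where "e = u1 - v1"
      define B where "B = {v\<in>V. v + e \<notin> U}"
      define V' where "V' = V \<inter> {v. v + e \<in> U}"
      define U' where "U' = U \<union> (\<lambda>v. v + e) ` V"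
      define U'' where "U'' = U - (\<lambda>v. v + e) ` V'"
      define V'' where "V'' = V - V'"
      have U'eq: "U' = U \<union> (\<lambda>v. v + e) ` B" unfolding U'_def B_def by auto
      have Bne: "B \<noteq> {}" using ns unfolding B_def e_def by auto
      have fB: "finite B" unfolding B_def using less.prems by auto
      have fV': "finite V'" unfolding V'_def using less.prems by auto
      have fU': "finite U'" unfolding U'_def using less.prems by auto
      have VV: "V = V' \<union> B" "V' \<inter> B = {}" unfolding V'_def B_def by auto
      have cV: "card V = card V' + card B"
        using VV card_Un_disjoint[OF fV' fB] by simp
      have inj: "inj_on (\<lambda>v. v + e) B" by (auto simp: inj_on_def)
      have cU': "card U' = card U + card B"
        unfolding U'eq
        by (subst card_Un_disjoint) (use less.prems fB card_image[OF inj] in \<open>auto simp: B_def\<close>)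
      have B0: "card B > 0" using Bne fB by auto
      have lt: "card V' < card V" using cV B0 by simp
      have sumeq: "card U' + card V' = card U + card V" using cU' cV by simp
      have v1V': "v1 \<in> V'" unfolding V'_def e_def using u1 v1 by simp
      have s1: "card V' \<ge> 1" using fV' v1V' by (metis One_nat_def Suc_leI card_gt_0_iff empty_iff)
      show ?thesis
      proof (cases "t \<le> card V'")
        case True
      have IH: "(\<Sum>x\<in>{u + v | u v. u \<in> U' \<and> v \<in> V'}. int (min (conv_count U' V' x) t))
           \<ge> int t * (int (card U') + int (card V') - int t - int a)"
      proof (rule less.hyps[OF lt fV' fU'])
        show "card V' \<le> card U'" using lt cU' less.prems(3) by simp
        show "t \<le> card V'" using True .
        fix W :: "'a set"
        assume "finite W" "card W \<le> card V'" "finite (gen_subgroup W)"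
          "card (gen_subgroup W) + card W \<le> card U' + card V'"
        moreover have "card W \<le> card V" using \<open>card W \<le> card V'\<close> lt by simp
        ultimately show "card W \<le> a" using less.prems(5)[of W] sumeq by simp
      qed
      have sub: "{u + v | u v. u \<in> U' \<and> v \<in> V'} \<subseteq> ?S"
      proof
        fix x assume "x \<in> {u + v | u v. u \<in> U' \<and> v \<in> V'}"
        then obtain u v where x: "x = u + v" "u \<in> U'" "v \<in> V'" by blast
        show "x \<in> ?S"
        proof (cases "u \<in> U")
          case True thus ?thesis using x unfolding V'_def by blast
        next
          case False
          then obtain w where "w \<in> V" "u = w + e" using x unfolding U'_def by blast
          hence "x = (v + e) + w" using x by (simp add: algebra_simps)
          thus ?thesis using \<open>w \<in> V\<close> x unfolding V'_def by blast
        qed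
      qed
      have "(\<Sum>x\<in>{u + v | u v. u \<in> U' \<and> v \<in> V'}. int (min (conv_count U' V' x) t))
          \<le> (\<Sum>x\<in>{u + v | u v. u \<in> U' \<and> v \<in> V'}. int (min (conv_count U V x) t))"
      proof (rule sum_mono)
        fix x
        have "conv_count U' V' x \<le> conv_count U V x"
          unfolding U'_def V'_def by (rule conv_transform[OF less.prems(2,1)])
        hence "min (conv_count U' V' x) t \<le> min (conv_count U V x) t" by (rule min.mono) simp
        thus "int (min (conv_count U' V' x) t) \<le> int (min (conv_count U V x) t)" by simp
      qed
      also have "\<dots> \<le> (\<Sum>x\<in>?S. int (min (conv_count U V x) t))"
        by (rule sum_mono2[OF fS sub]) simp
      finally have le1: "(\<Sum>x\<in>{u + v | u v. u \<in> U' \<and> v \<in> V'}. int (min (conv_count U' V' x) t)) \<le> (\<Sum>x\<in>?S. int (min (conv_count U V x) t))" .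
      have "int (card U') + int (card V') = int (card U) + int (card V)" using sumeq by (metis of_nat_add)
      hence "int t * (int (card U') + int (card V') - int t - int a) = int t * (int (card U) + int (card V) - int t - int a)" by simp
      hence "int t * (int (card U) + int (card V) - int t - int a) = int t * (int (card U') + int (card V') - int t - int a)" by (rule sym)
      also have "\<dots> \<le> (\<Sum>x\<in>{u + v | u v. u \<in> U' \<and> v \<in> V'}. int (min (conv_count U' V' x) t))" by (rule IH)
      also have "\<dots> \<le> (\<Sum>x\<in>?S. int (min (conv_count U V x) t))" by (rule le1)
      finally show ?thesis .
    next
      case False
      define s where "s = card V'"
      have st: "s < t" "1 \<le> s" using False s1 unfolding s_def by auto
      have fU'': "finite U''" unfolding U''_def using less.prems by auto
      have fV'': "finite V''" unfolding V''_def using less.prems by auto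
      have V''B: "V'' = B" unfolding V''_def V'_def B_def by auto
      have cV'': "card V'' = card V - s" using cV V''B unfolding s_def by simp
      have injV': "inj_on (\<lambda>v. v + e) V'" by (auto simp: inj_on_def)
      have imU: "(\<lambda>v. v + e) ` V' \<subseteq> U" unfolding V'_def by auto
      have cU'': "card U'' = card U - s"
        unfolding U''_def s_def using card_Diff_subset[OF finite_imageI[OF fV'] imU] card_image[OF injV']
        by simp
      have sV: "s \<le> card V" using lt unfolding s_def by simp
      have ltV'': "card V'' < card V" using cV'' st sV by simp
      have h1: "card U'' + card V'' \<le> card U + card V" using cU'' cV'' by simp
      have IH: "(\<Sum>x\<in>{u + v | u v. u \<in> U'' \<and> v \<in> V''}. int (min (conv_count U'' V'' x) (t - s)))
           \<ge> int (t - s) * (int (card U'') + int (card V'') - int (t - s) - int a)"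
      proof (rule less.hyps[OF ltV'' fV'' fU''])
        show "card V'' \<le> card U''" using cV'' cU'' less.prems(3) by simp
        show "t - s \<le> card V''" using cV'' tV by simp
        fix W :: "'a set"
        assume "finite W" "card W \<le> card V''" "finite (gen_subgroup W)"
          "card (gen_subgroup W) + card W \<le> card U'' + card V''"
        moreover have "card W \<le> card V" using \<open>card W \<le> card V''\<close> ltV'' by simp
        moreover have "card (gen_subgroup W) + card W \<le> card U + card V" using \<open>card (gen_subgroup W) + card W \<le> card U'' + card V''\<close> h1 by simp
        ultimately show "card W \<le> a" using less.prems(5)[of W] by simp
      qed
      have sub'': "{u + v | u v. u \<in> U'' \<and> v \<in> V''} \<subseteq> ?S"
        unfolding U''_def V''_def by blast
      have sub': "{u + v | u v. u \<in> U' \<and> v \<in> V'} \<subseteq> ?S"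
      proof
        fix x assume "x \<in> {u + v | u v. u \<in> U' \<and> v \<in> V'}"
        then obtain u v where x: "x = u + v" "u \<in> U'" "v \<in> V'" by blast
        show "x \<in> ?S"
        proof (cases "u \<in> U")
          case True thus ?thesis using x unfolding V'_def by blast
        next
          case False
          then obtain w where "w \<in> V" "u = w + e" using x unfolding U'_def by blast
          hence "x = (v + e) + w" using x by (simp add: algebra_simps)
          thus ?thesis using \<open>w \<in> V\<close> x unfolding V'_def by blast
        qed
      qed
      have pw: "int (conv_count U' V' x) + int (min (conv_count U'' V'' x) (t - s))
             \<le> int (min (conv_count U V x) t)" for x
      proof -
        have a1: "conv_count U' V' x \<le> s" using conv_le[OF fV'] unfolding s_def .
        have a2: "conv_count U' V' x + conv_count U'' V'' x \<le> conv_count U V x"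
          using conv_split[OF less.prems(2,1), of e x] unfolding U'_def V'_def U''_def V''_def .
        have "conv_count U' V' x + min (conv_count U'' V'' x) (t - s) \<le> min (conv_count U V x) t"
          using a1 a2 st by (auto simp: min_def)
        thus ?thesis by (metis of_nat_add of_nat_le_iff)
      qed
      have "(\<Sum>x\<in>?S. int (conv_count U' V' x)) = (\<Sum>x\<in>{u + v | u v. u \<in> U' \<and> v \<in> V'}. int (conv_count U' V' x))"
        by (rule sum.mono_neutral_right[OF fS sub']) (simp add: conv_zero)
      also have "\<dots> = int (\<Sum>x\<in>{u + v | u v. u \<in> U' \<and> v \<in> V'}. conv_count U' V' x)" by simp
      also have "\<dots> = int (card U') * int (card V')" by (simp only: sum_conv[OF fU' fV'] of_nat_mult)
      finally have e1: "(\<Sum>x\<in>?S. int (conv_count U' V' x)) = int (card U') * int s" unfolding s_def .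
      have e2: "(\<Sum>x\<in>?S. int (min (conv_count U'' V'' x) (t - s)))
          \<ge> (\<Sum>x\<in>{u + v | u v. u \<in> U'' \<and> v \<in> V''}. int (min (conv_count U'' V'' x) (t - s)))"
        by (rule sum_mono2[OF fS sub'']) simp
      have "(\<Sum>x\<in>?S. int (conv_count U' V' x)) + (\<Sum>x\<in>?S. int (min (conv_count U'' V'' x) (t - s)))
          \<le> (\<Sum>x\<in>?S. int (min (conv_count U V x) t))"
        unfolding sum.distrib[symmetric] by (rule sum_mono) (rule pw)
      hence main: "int (card U') * int s + int (t - s) * (int (card U'') + int (card V'') - int (t - s) - int a)
          \<le> (\<Sum>x\<in>?S. int (min (conv_count U V x) t))"
        using e1 e2 IH by linarith
      have cU'i: "int (card U') = int (card U) + int (card V) - int s" using sumeq unfolding s_def by simp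
      have cU''i: "int (card U'') = int (card U) - int s" using cU'' sV less.prems(3) by simp
      have cV''i: "int (card V'') = int (card V) - int s" using cV'' sV by simp
      have tsi: "int (t - s) = int t - int s" using st by simp
      have "int (card U') * int s + int (t - s) * (int (card U'') + int (card V'') - int (t - s) - int a)
          = int t * (int (card U) + int (card V) - int t - int a) + int s * int a"
        unfolding cU'i cU''i cV''i tsi by (simp add: algebra_simps)
      moreover have "0 \<le> int s * int a" by simp
      ultimately show ?thesis using main by linarith
    qed
    next
      case False
      hence stuck: "\<And>u v w. u \<in> U \<Longrightarrow> v \<in> V \<Longrightarrow> w \<in> V \<Longrightarrow> w + (u - v) \<in> U" by blast
      show ?thesis
      proof (cases "V = {}")
        case True
        hence "t = 0" using tV by simp
        thus ?thesis by (simp add: sum_nonneg)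
      next
        case False
        then obtain v0 where v0: "v0 \<in> V" by blast
        hence "U \<noteq> {}" using less.prems(1,3) by auto
        then obtain u0 where u0: "u0 \<in> U" by blast
        define H where "H = {h. (\<lambda>u. u + h) ` U = U}"
        define W where "W = (\<lambda>v. v - v0) ` V"
        have WH: "W \<subseteq> H"
        proof
          fix z assume "z \<in> W"
          then obtain w where w: "w \<in> V" "z = w - v0" unfolding W_def by blast
          have s: "(\<lambda>u. u + z) ` U \<subseteq> U"
          proof
            fix y assume "y \<in> (\<lambda>u. u + z) ` U"
            then obtain u where "u \<in> U" "y = u + z" by blast
            hence "y = w + (u - v0)" using w by (simp add: algebra_simps)
            thus "y \<in> U" using stuck[OF \<open>u \<in> U\<close> v0 w(1)] by simp
          qed
          have "card ((\<lambda>u. u + z) ` U) = card U" by (rule card_image) (auto simp: inj_on_def)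
          hence "(\<lambda>u. u + z) ` U = U" using card_subset_eq[OF less.prems(2) s] by simp
          thus "z \<in> H" unfolding H_def by simp
        qed
        have H0: "0 \<in> H" unfolding H_def by simp
        have Hadd: "\<forall>x\<in>H. \<forall>y\<in>H. x + y \<in> H"
        proof (intro ballI)
          fix x y assume "x \<in> H" "y \<in> H"
          hence "(\<lambda>u. u + y) ` ((\<lambda>u. u + x) ` U) = U" unfolding H_def by simp
          thus "x + y \<in> H" unfolding H_def by (simp add: image_image add.assoc)
        qed
        have Hneg: "\<forall>x\<in>H. - x \<in> H"
        proof
          fix x assume "x \<in> H"
          hence "(\<lambda>u. u + - x) ` ((\<lambda>u. u + x) ` U) = (\<lambda>u. u + - x) ` U" unfolding H_def by simp
          hence "U = (\<lambda>u. u + - x) ` U" by (simp add: image_image)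
          thus "- x \<in> H" unfolding H_def by simp
        qed
        have gH: "gen_subgroup W \<subseteq> H"
          unfolding gen_subgroup_def using WH H0 Hadd Hneg by (intro Inter_lower) auto
        have HU: "H \<subseteq> (\<lambda>u. u - u0) ` U"
        proof
          fix h assume "h \<in> H"
          hence eqH: "(\<lambda>u. u + h) ` U = U" unfolding H_def by simp
          have "u0 + h \<in> (\<lambda>u. u + h) ` U" using u0 by blast
          hence "u0 + h \<in> U" using eqH by simp
          moreover have "h = (u0 + h) - u0" by simp
          ultimately show "h \<in> (\<lambda>u. u - u0) ` U" by blast
        qed
        have fH: "finite H" using HU less.prems(2) finite_subset by blast
        have cH: "card H \<le> card U"
          using card_mono[OF finite_imageI[OF less.prems(2)] HU] card_image_le[OF less.prems(2), of "\<lambda>u. u - u0"]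
          by linarith
        have fg: "finite (gen_subgroup W)" using gH fH finite_subset by blast
        have cg: "card (gen_subgroup W) \<le> card U" using card_mono[OF fH gH] cH by simp
        have cW: "card W = card V" unfolding W_def by (rule card_image) (auto simp: inj_on_def)
        have fW: "finite W" unfolding W_def using less.prems by simp
        have c1: "card W \<le> card V" using cW by simp
        have c2: "card (gen_subgroup W) + card W \<le> card U + card V" using cg cW by simp
        have "card W \<le> a" using less.prems(5) fW c1 fg c2 by blast
        hence aV: "card V \<le> a" using cW by simp
        have conv: "conv_count U V x = card V" if "x \<in> ?S" for x
        proof -
          from that obtain u' v' where x: "x = u' + v'" "u' \<in> U" "v' \<in> V" by blast
          have "{(u, v). u \<in> U \<and> v \<in> V \<and> u + v = x} = (\<lambda>v. (x - v, v)) ` V"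
          proof (auto)
            fix v assume "v \<in> V"
            have "x - v = v' + (u' - v)" using x by (simp add: algebra_simps)
            thus "x - v \<in> U" using stuck[OF x(2) \<open>v \<in> V\<close> x(3)] by (simp only:)
          qed
          also have "card \<dots> = card V" by (rule card_image) (auto simp: inj_on_def)
          finally show ?thesis unfolding conv_count_def .
        qed
        have Seq: "?S = (\<lambda>u. u + v0) ` U"
        proof (auto)
          fix u v assume "u \<in> U" "v \<in> V"
          have "u + v = (v + (u - v0)) + v0" by (simp add: algebra_simps)
          thus "u + v \<in> (\<lambda>u. u + v0) ` U" using stuck[OF \<open>u \<in> U\<close> v0 \<open>v \<in> V\<close>] by blast
        next
          fix u assume "u \<in> U" thus "\<exists>u' v. u + v0 = u' + v \<and> u' \<in> U \<and> v \<in> V" using v0 by blast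
        qed
        have cS: "card ?S = card U" unfolding Seq by (rule card_image) (auto simp: inj_on_def)
        have "(\<Sum>x\<in>?S. int (min (conv_count U V x) t)) = (\<Sum>x\<in>?S. int t)"
          using conv tV by (intro sum.cong) auto
        also have "\<dots> = int t * int (card U)" using cS by simp
        finally have eq: "(\<Sum>x\<in>?S. int (min (conv_count U V x) t)) = int t * int (card U)" .
        have le0: "int (card U) + int (card V) - int t - int a \<le> int (card U)" using aV by linarith
        have "int t * (int (card U) + int (card V) - int t - int a) \<le> int t * int (card U)"
          using mult_left_mono[OF le0, of "int t"] by simp
        thus ?thesis unfolding eq .
      qed
    qed
qed

theorem theorem3p2:
  fixes U V :: "'a::ab_group_add set" and t :: nat
  assumes "finite U" and "finite V" and "0 < t" and "t \<le> card V" and "card V \<le> card U"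
  shows "(\<Sum>x\<in>{u + v | u v. u \<in> U \<and> v \<in> V}. int (min (conv_count U V x) t))
           \<ge> int t * (int (card U) + int (card V) - int t - int (alpha U V))"
proof (rule main)
  show "finite V" "finite U" "card V \<le> card U" "t \<le> card V" using assms by auto
  fix W :: "'a set"
  assume "finite W" "card W \<le> card V" "finite (gen_subgroup W)"
    "card (gen_subgroup W) + card W \<le> card U + card V"
  hence mem: "card W \<in> {card V' | V' :: 'a set. finite V' \<and> card V' \<le> card V \<and>
      finite (gen_subgroup V') \<and> card (gen_subgroup V') + card V' \<le> card U + card V}" by blast
  have fin: "finite {card V' | V' :: 'a set. finite V' \<and> card V' \<le> card V \<and>
      finite (gen_subgroup V') \<and> card (gen_subgroup V') + card V' \<le> card U + card V}"
    by (rule finite_subset[of _ "{..card V}"]) auto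
  show "card W \<le> alpha U V" unfolding alpha_def by (rule Max_ge[OF fin mem])
qed

end
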